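(* Let $R=\mathbb{K}[x_{i,i+1},x_{i,i+2}: i\in\mathbb{N}]$ and $I=\ker\varphi$, where $\varphi:R\to\mathbb{K}[x_i: i\in\mathbb{N}]$ is given by $\varphi(x_{i,i+1})=x_ix_{i+1}$, $\varphi(x_{i,i+2})=x_ix_{i+2}$. Then $I$ is not finitely generated up to shift, i.e. there is no finite subset $F\subseteq I$ such that the polynomials $\operatorname{sh}_k(f)$, $f\in F$, $k\in\mathbb{N}_0$, generate $I$.
   Context: $\mathbb{K}$ is a field; $\operatorname{sh}_k$ is the ring endomorphism of $R$ with $x_{i,j}\mapsto x_{i+k,j+k}$. *)

theory Defs
  imports Main "HOL-Library.Poly_Mapping"
begin

type_synonym ('v, 'k) mpoly = "('v \<Rightarrow>\<^sub>0 nat) \<Rightarrow>\<^sub>0 'k"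

text \<open>Variables of R: Edge1 i = x_{i,i+1}, Edge2 i = x_{i,i+2} (i ranges over nat).\<close>
datatype rvar = Edge1 nat | Edge2 nat

fun rvar_ends :: "rvar \<Rightarrow> nat \<times> nat" where
  "rvar_ends (Edge1 i) = (i, i + 1)"
| "rvar_ends (Edge2 i) = (i, i + 2)"

fun rvar_shift :: "nat \<Rightarrow> rvar \<Rightarrow> rvar" where
  "rvar_shift k (Edge1 i) = Edge1 (i + k)"
| "rvar_shift k (Edge2 i) = Edge2 (i + k)"

definition phi_mono :: "(rvar \<Rightarrow>\<^sub>0 nat) \<Rightarrow> (nat \<Rightarrow>\<^sub>0 nat)" where
  "phi_mono m = (\<Sum>v\<in>Poly_Mapping.keys m. Poly_Mapping.single (fst (rvar_ends v)) (Poly_Mapping.lookup m v)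
                             + Poly_Mapping.single (snd (rvar_ends v)) (Poly_Mapping.lookup m v))"

definition phi :: "(rvar, 'k::field) mpoly \<Rightarrow> (nat, 'k) mpoly" where
  "phi p = (\<Sum>m\<in>Poly_Mapping.keys p. Poly_Mapping.single (phi_mono m) (Poly_Mapping.lookup p m))"

definition shift_mono :: "nat \<Rightarrow> (rvar \<Rightarrow>\<^sub>0 nat) \<Rightarrow> (rvar \<Rightarrow>\<^sub>0 nat)" where
  "shift_mono k m = (\<Sum>v\<in>Poly_Mapping.keys m. Poly_Mapping.single (rvar_shift k v) (Poly_Mapping.lookup m v))"

definition sh :: "nat \<Rightarrow> (rvar, 'k::field) mpoly \<Rightarrow> (rvar, 'k) mpoly" where
  "sh k p = (\<Sum>m\<in>Poly_Mapping.keys p. Poly_Mapping.single (shift_mono k m) (Poly_Mapping.lookup p m))"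

definition ideal_gen :: "'a::comm_ring_1 set \<Rightarrow> 'a set" where
  "ideal_gen S = {\<Sum>i<n. c i * g i | (n::nat) c g. \<forall>i<n. g i \<in> S}"

definition kerI :: "(rvar, 'k::field) mpoly set" where
  "kerI = {p. phi p = 0}"

end

theory Submission
  imports Defs
begin


lemma sum_keys_when:
  fixes m :: "'a \<Rightarrow>\<^sub>0 'b::comm_monoid_add"
  assumes "finite A" "\<And>v. v \<in> Poly_Mapping.keys m \<Longrightarrow> P v \<longleftrightarrow> v \<in> A"
  shows "(\<Sum>v\<in>Poly_Mapping.keys m. (Poly_Mapping.lookup m v when P v)) = (\<Sum>v\<in>A. Poly_Mapping.lookup m v)"
proof -
  have "(\<Sum>v\<in>Poly_Mapping.keys m. (Poly_Mapping.lookup m v when P v))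
      = (\<Sum>v\<in>Poly_Mapping.keys m \<inter> A. Poly_Mapping.lookup m v)"
    by (rule sum.mono_neutral_cong_right) (use assms in auto)
  also have "\<dots> = (\<Sum>v\<in>A. Poly_Mapping.lookup m v)"
    by (rule sum.mono_neutral_left) (use assms in \<open>auto simp: in_keys_iff\<close>)
  finally show ?thesis .
qed

lemma lookup_sum_single_inj:
  fixes m :: "'a \<Rightarrow>\<^sub>0 'b::comm_monoid_add"
  assumes "inj f"
  shows "Poly_Mapping.lookup (\<Sum>v\<in>Poly_Mapping.keys m. Poly_Mapping.single (f v) (Poly_Mapping.lookup m v)) (f w)
     = Poly_Mapping.lookup m w"
proof -
  have "Poly_Mapping.lookup (\<Sum>v\<in>Poly_Mapping.keys m. Poly_Mapping.single (f v) (Poly_Mapping.lookup m v)) (f w)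
     = (\<Sum>v\<in>Poly_Mapping.keys m. (Poly_Mapping.lookup m v when f v = f w))"
    by (simp add: lookup_sum lookup_single)
  also have "\<dots> = (\<Sum>v\<in>{w}. Poly_Mapping.lookup m v)"
    by (rule sum_keys_when) (use assms in \<open>auto dest: injD\<close>)
  finally show ?thesis by simp
qed

lemma lookup_sum_single_notin:
  fixes m :: "'a \<Rightarrow>\<^sub>0 'b::comm_monoid_add"
  assumes "w \<notin> range f"
  shows "Poly_Mapping.lookup (\<Sum>v\<in>Poly_Mapping.keys m. Poly_Mapping.single (f v) (Poly_Mapping.lookup m v)) w = 0"
  using assms by (auto simp: lookup_sum lookup_single intro!: sum.neutral)

definition degf :: "(rvar \<Rightarrow>\<^sub>0 nat) \<Rightarrow> nat \<Rightarrow> nat" where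
  "degf m i = Poly_Mapping.lookup m (Edge1 i) + Poly_Mapping.lookup m (Edge2 i)
     + (if 1 \<le> i then Poly_Mapping.lookup m (Edge1 (i - 1)) else 0)
     + (if 2 \<le> i then Poly_Mapping.lookup m (Edge2 (i - 2)) else 0)"

lemma lookup_phi_mono: "Poly_Mapping.lookup (phi_mono m) i = degf m i"
proof -
  have "Poly_Mapping.lookup (phi_mono m) i =
     (\<Sum>v\<in>Poly_Mapping.keys m. (Poly_Mapping.lookup m v when fst (rvar_ends v) = i))
   + (\<Sum>v\<in>Poly_Mapping.keys m. (Poly_Mapping.lookup m v when snd (rvar_ends v) = i))"
    by (simp add: phi_mono_def lookup_sum lookup_add lookup_single sum.distrib eq_commute)
  also have "(\<Sum>v\<in>Poly_Mapping.keys m. (Poly_Mapping.lookup m v when fst (rvar_ends v) = i))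
     = (\<Sum>v\<in>{Edge1 i, Edge2 i}. Poly_Mapping.lookup m v)"
    apply (rule sum_keys_when)
     apply simp
    subgoal for v by (cases v) auto
    done
  also have "(\<Sum>v\<in>Poly_Mapping.keys m. (Poly_Mapping.lookup m v when snd (rvar_ends v) = i))
     = (\<Sum>v\<in>(if 1 \<le> i then {Edge1 (i-1)} else {}) \<union> (if 2 \<le> i then {Edge2 (i-2)} else {}). Poly_Mapping.lookup m v)"
    apply (rule sum_keys_when)
     apply simp
    subgoal for v by (cases v) auto
    done
  finally show ?thesis
    by (cases "i = 0"; cases "i = 1") (auto simp: degf_def)
qed

lemma inj_rvar_shift: "inj (rvar_shift k)"
proof (rule injI)
  fix u v assume "rvar_shift k u = rvar_shift k v"
  then show "u = v" by (cases u; cases v) auto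
qed

lemma lookup_shift_mono_shift: "Poly_Mapping.lookup (shift_mono k m) (rvar_shift k v) = Poly_Mapping.lookup m v"
  unfolding shift_mono_def by (rule lookup_sum_single_inj[OF inj_rvar_shift])

lemma lookup_shift_mono_notin: "w \<notin> range (rvar_shift k) \<Longrightarrow> Poly_Mapping.lookup (shift_mono k m) w = 0"
  unfolding shift_mono_def by (rule lookup_sum_single_notin)

lemma lookup_shift_E1: "Poly_Mapping.lookup (shift_mono k m) (Edge1 i) = (if k \<le> i then Poly_Mapping.lookup m (Edge1 (i - k)) else 0)"
proof (cases "k \<le> i")
  case True
  then have "Edge1 i = rvar_shift k (Edge1 (i - k))" by simp
  then show ?thesis using True by (metis lookup_shift_mono_shift)
next
  case False
  have "Edge1 i \<notin> range (rvar_shift k)"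
  proof
    assume "Edge1 i \<in> range (rvar_shift k)"
    then obtain v where "Edge1 i = rvar_shift k v" by auto
    then show False using False by (cases v) auto
  qed
  then show ?thesis using False by (simp add: lookup_shift_mono_notin)
qed

lemma lookup_shift_E2: "Poly_Mapping.lookup (shift_mono k m) (Edge2 i) = (if k \<le> i then Poly_Mapping.lookup m (Edge2 (i - k)) else 0)"
proof (cases "k \<le> i")
  case True
  then have "Edge2 i = rvar_shift k (Edge2 (i - k))" by simp
  then show ?thesis using True by (metis lookup_shift_mono_shift)
next
  case False
  have "Edge2 i \<notin> range (rvar_shift k)"
  proof
    assume "Edge2 i \<in> range (rvar_shift k)"
    then obtain v where "Edge2 i = rvar_shift k v" by auto
    then show False using False by (cases v) auto
  qed
  then show ?thesis using False by (simp add: lookup_shift_mono_notin)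
qed

lemma degf_shift: "degf (shift_mono k m) i = (if k \<le> i then degf m (i - k) else 0)"
proof -
  have a: "(if 1 \<le> i then Poly_Mapping.lookup (shift_mono k m) (Edge1 (i - 1)) else 0)
     = (if k \<le> i \<and> 1 \<le> i - k then Poly_Mapping.lookup m (Edge1 (i - k - 1)) else 0)"
    by (cases "1 \<le> i"; cases "k \<le> i - 1") (auto simp: lookup_shift_E1)
  have b: "(if 2 \<le> i then Poly_Mapping.lookup (shift_mono k m) (Edge2 (i - 2)) else 0)
     = (if k \<le> i \<and> 2 \<le> i - k then Poly_Mapping.lookup m (Edge2 (i - k - 2)) else 0)"
    by (cases "2 \<le> i"; cases "k \<le> i - 2") (auto simp: lookup_shift_E2)
  show ?thesis unfolding degf_def a b by (auto simp: lookup_shift_E1 lookup_shift_E2)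
qed
lemma phi_mono_eq_iff: "phi_mono a = phi_mono b \<longleftrightarrow> (\<forall>i. degf a i = degf b i)"
proof
  assume "phi_mono a = phi_mono b" then show "\<forall>i. degf a i = degf b i" by (simp add: lookup_phi_mono[symmetric])
next
  assume "\<forall>i. degf a i = degf b i" then show "phi_mono a = phi_mono b"
    by (intro poly_mapping_eqI) (simp add: lookup_phi_mono)
qed

lemma phi_mono_shift_iff: "phi_mono (shift_mono k a) = phi_mono (shift_mono k b) \<longleftrightarrow> phi_mono a = phi_mono b"
proof
  assume "phi_mono (shift_mono k a) = phi_mono (shift_mono k b)"
  then have "\<forall>i. degf (shift_mono k a) (i + k) = degf (shift_mono k b) (i + k)"
    by (simp add: phi_mono_eq_iff)
  then show "phi_mono a = phi_mono b" by (simp add: phi_mono_eq_iff degf_shift)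
qed (simp add: phi_mono_eq_iff degf_shift)

lemma inj_shift_mono: "inj (shift_mono k)"
proof (rule injI)
  fix a b assume ab: "shift_mono k a = shift_mono k b"
  have "Poly_Mapping.lookup a v = Poly_Mapping.lookup b v" for v
    using lookup_shift_mono_shift[of k a v] lookup_shift_mono_shift[of k b v] ab by simp
  then show "a = b" by (rule poly_mapping_eqI)
qed

lemma keys_shift_mono: "Poly_Mapping.keys (shift_mono k m) = rvar_shift k ` Poly_Mapping.keys m"
proof (rule set_eqI)
  fix w show "w \<in> Poly_Mapping.keys (shift_mono k m) \<longleftrightarrow> w \<in> rvar_shift k ` Poly_Mapping.keys m"
  proof (cases "w \<in> range (rvar_shift k)")
    case True
    then obtain v where v: "w = rvar_shift k v" by blast
    have "w \<in> Poly_Mapping.keys (shift_mono k m) \<longleftrightarrow> v \<in> Poly_Mapping.keys m"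
      unfolding v in_keys_iff lookup_shift_mono_shift ..
    also have "\<dots> \<longleftrightarrow> w \<in> rvar_shift k ` Poly_Mapping.keys m"
      unfolding v using inj_image_mem_iff[OF inj_rvar_shift] by blast
    finally show ?thesis .
  next
    case False
    then have "w \<notin> rvar_shift k ` Poly_Mapping.keys m" by blast
    then show ?thesis using False lookup_shift_mono_notin[OF False, of m] by (simp add: in_keys_iff)
  qed
qed

lemma card_keys_shift_mono: "card (Poly_Mapping.keys (shift_mono k m)) = card (Poly_Mapping.keys m)"
  unfolding keys_shift_mono by (rule card_image) (rule inj_on_subset[OF inj_rvar_shift subset_UNIV])

lemma lookup_sh_shift: "Poly_Mapping.lookup (sh k p) (shift_mono k m) = Poly_Mapping.lookup p m"
  unfolding sh_def by (rule lookup_sum_single_inj[OF inj_shift_mono])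

lemma lookup_sh_notin: "w \<notin> range (shift_mono k) \<Longrightarrow> Poly_Mapping.lookup (sh k p) w = 0"
  unfolding sh_def by (rule lookup_sum_single_notin)

lemma keys_sh: "Poly_Mapping.keys (sh k p) \<subseteq> shift_mono k ` Poly_Mapping.keys p"
proof
  fix w assume w: "w \<in> Poly_Mapping.keys (sh k p)"
  then have "w \<in> range (shift_mono k)" using lookup_sh_notin[of w k p] by (auto simp: in_keys_iff)
  then obtain m where "w = shift_mono k m" by auto
  then show "w \<in> shift_mono k ` Poly_Mapping.keys p" using w by (auto simp: in_keys_iff lookup_sh_shift)
qed

definition rigid :: "(rvar \<Rightarrow>\<^sub>0 nat) \<Rightarrow> bool" where
  "rigid b \<longleftrightarrow> (\<forall>b'. phi_mono b' = phi_mono b \<longrightarrow> b' = b)"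

lemma ker_rigid:
  fixes p :: "(rvar, 'k::field) mpoly"
  assumes "p \<in> kerI" "rigid b"
  shows "Poly_Mapping.lookup p b = 0"
proof -
  have "0 = Poly_Mapping.lookup (phi p) (phi_mono b)" using assms(1) by (simp add: kerI_def)
  also have "\<dots> = (\<Sum>m\<in>Poly_Mapping.keys p. (Poly_Mapping.lookup p m when phi_mono m = phi_mono b))"
    by (simp add: phi_def lookup_sum lookup_single)
  also have "\<dots> = (\<Sum>m\<in>{b}. Poly_Mapping.lookup p m)"
    by (rule sum_keys_when) (use assms(2) in \<open>auto simp: rigid_def\<close>)
  finally show ?thesis by simp
qed

lemma sh_rigid:
  fixes f :: "(rvar, 'k::field) mpoly"
  assumes "f \<in> kerI" "rigid b"
  shows "Poly_Mapping.lookup (sh k f) b = 0"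
proof (cases "b \<in> range (shift_mono k)")
  case True
  then obtain b0 where b0: "b = shift_mono k b0" by auto
  have "rigid b0" unfolding rigid_def
  proof (intro allI impI)
    fix b' assume "phi_mono b' = phi_mono b0"
    then have "phi_mono (shift_mono k b') = phi_mono b" by (simp add: b0 phi_mono_shift_iff)
    then have "shift_mono k b' = shift_mono k b0" using assms(2) b0 by (simp add: rigid_def)
    then show "b' = b0" using inj_shift_mono by (metis injD)
  qed
  then show ?thesis using b0 assms(1) by (simp add: lookup_sh_shift ker_rigid)
qed (simp add: lookup_sh_notin)

lemma lookup_mult_zero:
  fixes c g :: "(rvar, 'k::field) mpoly"
  assumes "\<And>q. (\<And>v. Poly_Mapping.lookup q v \<le> Poly_Mapping.lookup m v) \<Longrightarrow> Poly_Mapping.lookup g q = 0"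
  shows "Poly_Mapping.lookup (c * g) m = 0"
proof -
  have "(Poly_Mapping.lookup g q when m = l + q) = 0" for l q
  proof (cases "m = l + q")
    case True
    then have "Poly_Mapping.lookup q v \<le> Poly_Mapping.lookup m v" for v by (simp add: lookup_add)
    then show ?thesis using assms by simp
  qed simp
  then show ?thesis by (simp add: lookup_mult)
qed


definition Df :: "(rvar \<Rightarrow> nat) \<Rightarrow> nat \<Rightarrow> nat" where
  "Df h i = h (Edge1 i) + h (Edge2 i) + (if 1 \<le> i then h (Edge1 (i - 1)) else 0)
     + (if 2 \<le> i then h (Edge2 (i - 2)) else 0)"

definition w1 :: "nat \<Rightarrow> rvar \<Rightarrow> nat" where
  "w1 r v = (case v of Edge1 i \<Rightarrow> if i = 0 \<or> i = 4*r+1 then 1 else 0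
                    | Edge2 i \<Rightarrow> if i mod 4 = 2 \<and> i < 4*r then 2 else 0)"

definition w2 :: "nat \<Rightarrow> rvar \<Rightarrow> nat" where
  "w2 r v = (case v of Edge1 i \<Rightarrow> if i = 1 \<or> i = 4*r then 1 else 0
                    | Edge2 i \<Rightarrow> if i = 0 \<or> i = 4*r then 1 else if i mod 4 = 0 \<and> i < 4*r then 2 else 0)"

lemma w1_simps [simp]:
  "w1 r (Edge1 i) = (if i = 0 \<or> i = 4*r+1 then 1 else 0)"
  "w1 r (Edge2 i) = (if i mod 4 = 2 \<and> i < 4*r then 2 else 0)"
  by (simp_all add: w1_def)

lemma w2_simps [simp]:
  "w2 r (Edge1 i) = (if i = 1 \<or> i = 4*r then 1 else 0)"
  "w2 r (Edge2 i) = (if i = 0 \<or> i = 4*r then 1 else if i mod 4 = 0 \<and> i < 4*r then 2 else 0)"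
  by (simp_all add: w2_def)

lemma forms: "i = 0 \<or> i = 1 \<or> (\<exists>p. i = 4*p+4) \<or> (\<exists>p. i = 4*p+5) \<or> (\<exists>q. i = 4*q+2) \<or> (\<exists>q. i = (4*q+3::nat))"
  by presburger

lemma Df_w_eq:
  assumes r: "1 \<le> r"
  shows "Df (w1 r) i = Df (w2 r) i"
proof -
  consider "i = 0" | "i = 1" | p where "i = 4*p+4" | p where "i = 4*p+5" | q where "i = 4*q+2" | q where "i = 4*q+3"
    using forms[of i] by blast
  then show ?thesis
  proof cases
    case 1 then show ?thesis using r by (simp add: Df_def)
  next
    case 2 then show ?thesis using r by (simp add: Df_def)
  next
    case 3 then show ?thesis using r by (simp add: Df_def; presburger)
  next
    case 4 then show ?thesis using r by (simp add: Df_def; presburger)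
  next
    case 5 then show ?thesis using r by (simp add: Df_def; presburger)
  next
    case 6 then show ?thesis using r by (simp add: Df_def; presburger)
  qed
qed

definition outv :: "nat \<Rightarrow> nat \<Rightarrow> bool" where
  "outv r j \<longleftrightarrow> (j mod 2 = 1 \<and> 3 \<le> j \<and> j < 4*r) \<or> j > 4*r+2"
lemma mod4_even: "(x::nat) mod 4 = 2 \<Longrightarrow> even x"
  by presburger
lemma Df_w1_out:
  assumes "outv r j"
  shows "Df (w1 r) j = 0"
proof -
  have h: "(odd j \<and> 3 \<le> j \<and> j < 4*r) \<or> j > 4*r+2" using assms by (simp add: outv_def odd_iff_mod_2_eq_one)
  then show ?thesis
  proof
    assume a: "odd j \<and> 3 \<le> j \<and> j < 4*r"
    then obtain m0 where m0: "j = 2*m0+1" by (meson oddE)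
    then have "m0 \<ge> 1" using a by simp
    define m where "m = m0 - 1"
    have m: "j = 2*m+3" using m0 \<open>m0 \<ge> 1\<close> by (simp add: m_def)
    have "\<not> (2*m+3) mod 4 = 2" "\<not> (2*m+1) mod 4 = 2" using mod4_even[of "2*m+3"] mod4_even[of "2*m+1"] by auto
    then show ?thesis using a unfolding m Df_def by simp
  next
    assume a: "j > 4*r+2"
    then have "j - 1 \<noteq> 4*r+1" "\<not> j - 2 < 4*r" by auto
    then show ?thesis using a unfolding Df_def by simp
  qed
qed
lemma Df_mono: "(\<And>v. y v \<le> z v) \<Longrightarrow> Df y j \<le> Df z j"
  unfolding Df_def by (intro add_mono) auto

lemma rigid_core:
  assumes r: "1 \<le> r" and y: "\<And>v. y v \<le> w1 r v" and D: "\<And>i. Df x i = Df y i"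
  shows "x = y \<or> y = w1 r"
proof -
  obtain s where rs: "r = Suc s" using r by (cases r) auto
  have ar: "4*r - 1 = 4*s+3" "4*r - 2 = 4*s+2" "2*r - 1 = 2*s+1" "4*r = 4*s+4" using rs by simp_all
  have yz: "y v = 0" if "w1 r v = 0" for v using y[of v] that by simp
  have Dx0: "Df x j = 0" if "outv r j" for j
    using D[of j] Df_mono[of y "w1 r" j, OF y] Df_w1_out[OF that] by simp
  have x0: "x (Edge1 j) = 0 \<and> x (Edge2 j) = 0 \<and> (1 \<le> j \<longrightarrow> x (Edge1 (j - 1)) = 0) \<and> (2 \<le> j \<longrightarrow> x (Edge2 (j-2)) = 0)"
    if "outv r j" for j using Dx0[OF that] unfolding Df_def by (auto split: if_splits)
  have xE1: "x (Edge1 i) = 0" if "i \<noteq> 0" "i \<noteq> 1" "i \<noteq> 4*r" "i \<noteq> 4*r+1" for i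
  proof (cases "outv r i")
    case True then show ?thesis using x0 by blast
  next
    case False
    then have "outv r (i+1)" using that unfolding outv_def by presburger
    then show ?thesis using x0[of "i+1"] by simp
  qed
  have xE2: "x (Edge2 i) = 0" if "\<not> (even i \<and> i \<le> 4*r)" for i
  proof (cases "outv r i")
    case True then show ?thesis using x0 by blast
  next
    case False
    then have "outv r (i+2)" using that unfolding outv_def by presburger
    then show ?thesis using x0[of "i+2"] by simp
  qed
  define a where "a = x (Edge1 1)"
  have v0: "x (Edge1 0) + x (Edge2 0) = y (Edge1 0)" using D[of 0] yz[of "Edge2 0"] by (simp add: Df_def)
  have v1: "x (Edge1 1) + x (Edge1 0) = y (Edge1 0)"
    using D[of 1] yz[of "Edge2 1"] yz[of "Edge1 1"] xE2[of 1] r by (simp add: Df_def)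
  have e0: "x (Edge1 0) + a = y (Edge1 0)" and c0: "x (Edge2 0) = a" using v0 v1 a_def by auto
  have v2: "x (Edge2 2) + 2 * a = y (Edge2 2)"
    using D[of 2] yz[of "Edge1 2"] yz[of "Edge1 1"] yz[of "Edge2 0"] xE1[of 2] r c0 a_def
    by (simp add: Df_def)
  have chain: "1 \<le> j \<longrightarrow> j \<le> 2*r-1 \<longrightarrow> (odd j \<longrightarrow> x (Edge2 (2*j)) + 2*a = y (Edge2 (2*j)))
      \<and> (even j \<longrightarrow> x (Edge2 (2*j)) = 2*a \<and> y (Edge2 (2*j)) = 0)" for j
  proof (induction j)
    case 0 then show ?case by simp
  next
    case (Suc j)
    show ?case
    proof (cases "j = 0")
      case True then show ?thesis using v2 by simp
    next
      case False
      show ?thesis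
      proof (intro impI)
        assume j1: "Suc j \<le> 2*r-1"
        have IH: "(odd j \<longrightarrow> x (Edge2 (2*j)) + 2*a = y (Edge2 (2*j)))
          \<and> (even j \<longrightarrow> x (Edge2 (2*j)) = 2*a \<and> y (Edge2 (2*j)) = 0)" using Suc.IH False j1 by simp
        have z1: "x (Edge1 (2*j+2)) = 0" "x (Edge1 (2*j+1)) = 0" using xE1 j1 False by auto
        have z2: "y (Edge1 (2*j+2)) = 0" "y (Edge1 (2*j+1)) = 0" using yz j1 False by auto
        have DD: "x (Edge2 (2*j+2)) + x (Edge2 (2*j)) = y (Edge2 (2*j+2)) + y (Edge2 (2*j))"
          using D[of "2*j+2"] z1 z2 by (simp add: Df_def)
        show "(odd (Suc j) \<longrightarrow> x (Edge2 (2 * Suc j)) + 2 * a = y (Edge2 (2 * Suc j))) \<and>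
          (even (Suc j) \<longrightarrow> x (Edge2 (2 * Suc j)) = 2 * a \<and> y (Edge2 (2 * Suc j)) = 0)"
        proof (cases "even j")
          case True
          then have "(2*j+2) mod 4 = 2" by presburger
          then show ?thesis using True IH DD by auto
        next
          case False
          then have "(2*j+2) mod 4 = 0" by presburger
          then have "y (Edge2 (2*j+2)) = 0" using yz by simp
          then show ?thesis using False IH DD by auto
        qed
      qed
    qed
  qed
  have last: "x (Edge2 (4*r-2)) + 2*a = y (Edge2 (4*r-2))"
  proof -
    have "odd (2*r-1)" using ar by simp
    moreover have "2*(2*r-1) = 4*r-2" by simp
    ultimately show ?thesis using chain[of "2*r-1"] r by auto
  qed
  have v4r: "x (Edge1 (4*r)) + x (Edge2 (4*r)) = 2*a"
  proof -
    have "(4*r) mod 4 = 0" "4*r - 1 \<noteq> 0" using ar by simp_all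
    then have "y (Edge1 (4*r)) = 0" "y (Edge2 (4*r)) = 0" "y (Edge1 (4*r-1)) = 0" using yz r by auto
    moreover have "x (Edge1 (4*r-1)) = 0" using xE1 r by auto
    ultimately show ?thesis using D[of "4*r"] last r by (simp add: Df_def)
  qed
  have v4r1: "x (Edge1 (4*r+1)) + x (Edge1 (4*r)) = y (Edge1 (4*r+1))"
  proof -
    have "(4*r+1) mod 4 = 1" "(4*r-1) mod 4 = 3" using ar by simp_all
    then have "y (Edge2 (4*r+1)) = 0" "y (Edge1 (4*r)) = 0" "y (Edge2 (4*r-1)) = 0" using yz r by auto
    moreover have "x (Edge2 (4*r+1)) = 0" "x (Edge2 (4*r-1)) = 0" using xE2[of "4*r+1"] xE2[of "4*r-1"] ar by simp_all
    ultimately show ?thesis using D[of "4*r+1"] r by (simp add: Df_def)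
  qed
  have v4r2: "x (Edge1 (4*r+1)) + x (Edge2 (4*r)) = y (Edge1 (4*r+1))"
  proof -
    have "(4*r) mod 4 = 0" by simp
    then have "y (Edge1 (4*r+2)) = 0" "y (Edge2 (4*r+2)) = 0" "y (Edge2 (4*r)) = 0" using yz r by auto
    moreover have "x (Edge1 (4*r+2)) = 0" using xE1 r by auto
    moreover have "x (Edge2 (4*r+2)) = 0" using xE2[of "4*r+2"] by simp
    ultimately show ?thesis using D[of "4*r+2"] r by (simp add: Df_def)
  qed
  have s: "x (Edge1 (4*r)) = a" and u: "x (Edge2 (4*r)) = a" and t: "x (Edge1 (4*r+1)) + a = y (Edge1 (4*r+1))"
    using v4r v4r1 v4r2 by auto
  show ?thesis
  proof (cases "a = 0")
    case True
    have "x v = y v" for v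
    proof (cases v)
      case (Edge1 i)
      show ?thesis
      proof (cases "i = 0 \<or> i = 1 \<or> i = 4*r \<or> i = 4*r+1")
        case True
        then show ?thesis using Edge1 e0 s t \<open>a = 0\<close> a_def yz[of "Edge1 1"] yz[of "Edge1 (4*r)"] r by auto
      next
        case False
        then show ?thesis using Edge1 xE1 yz[of v] by auto
      qed
    next
      case (Edge2 i)
      show ?thesis
      proof (cases "even i \<and> i \<le> 4*r")
        case False
        then have "\<not> (i mod 4 = 2 \<and> i < 4*r)" by presburger
        then show ?thesis using Edge2 xE2 yz[of v] False by auto
      next
        case True
        then obtain j where j: "i = 2*j" "j \<le> 2*r" by auto
        have "j = 0 \<or> j = 2*r \<or> (1 \<le> j \<and> j \<le> 2*r-1)" using j(2) by linarith
        then consider "j = 0" | "j = 2*r" | "1 \<le> j" "j \<le> 2*r-1" by meson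
        then show ?thesis
        proof cases
          case 1 then show ?thesis using Edge2 j c0 \<open>a = 0\<close> yz[of "Edge2 0"] by simp
        next
          case 2
          have "(4*r) mod 4 = 0" by simp
          then show ?thesis using Edge2 j u \<open>a = 0\<close> yz[of "Edge2 (4*r)"] 2 by simp
        next
          case 3 then show ?thesis using Edge2 j chain[of j] \<open>a = 0\<close> by (cases "even j") auto
        qed
      qed
    qed
    then show ?thesis by auto
  next
    case False
    have "y v = w1 r v" for v
    proof (cases "w1 r v = 0")
      case True then show ?thesis using yz by simp
    next
      case nz: False
      show ?thesis
      proof (cases v)
        case (Edge1 i)
        then have "i = 0 \<or> i = 4*r+1" using nz by (auto split: if_splits)
        then show ?thesis using Edge1 e0 t False y[of v] by auto
      next
        case (Edge2 i)
        then have i: "i mod 4 = 2" "i < 4*r" using nz by (auto split: if_splits)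
        have "i = 2*(i div 2)" using mod4_even[OF i(1)] by simp
        moreover have "odd (i div 2)" using i(1) by presburger
        ultimately obtain j where j: "i = 2*j" "odd j" by blast
        then have "1 \<le> j" "j \<le> 2*r-1" using i by auto
        then have "x (Edge2 i) + 2*a = y (Edge2 i)" using chain[of j] j by auto
        then show ?thesis using Edge2 i False y[of v] by auto
      qed
    qed
    then show ?thesis by auto
  qed
qed



lemma fin_w1: "finite {v. w1 r v \<noteq> 0}"
proof (rule finite_subset)
  show "{v. w1 r v \<noteq> 0} \<subseteq> Edge1 ` {..4*r+1} \<union> Edge2 ` {..4*r}"
  proof
    fix v assume "v \<in> {v. w1 r v \<noteq> 0}"
    then show "v \<in> Edge1 ` {..4*r+1} \<union> Edge2 ` {..4*r}"
      by (cases v) (auto split: if_splits)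
  qed
qed auto

lemma fin_w2: "finite {v. w2 r v \<noteq> 0}"
proof (rule finite_subset)
  show "{v. w2 r v \<noteq> 0} \<subseteq> Edge1 ` {..4*r+1} \<union> Edge2 ` {..4*r}"
  proof
    fix v assume "v \<in> {v. w2 r v \<noteq> 0}"
    then show "v \<in> Edge1 ` {..4*r+1} \<union> Edge2 ` {..4*r}"
      by (cases v) (auto split: if_splits)
  qed
qed auto

definition m1 :: "nat \<Rightarrow> rvar \<Rightarrow>\<^sub>0 nat" where "m1 r = Abs_poly_mapping (w1 r)"
definition m2 :: "nat \<Rightarrow> rvar \<Rightarrow>\<^sub>0 nat" where "m2 r = Abs_poly_mapping (w2 r)"

lemma lookup_m1: "Poly_Mapping.lookup (m1 r) = w1 r"
  unfolding m1_def by (rule lookup_Abs_poly_mapping[OF fin_w1])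
lemma lookup_m2: "Poly_Mapping.lookup (m2 r) = w2 r"
  unfolding m2_def by (rule lookup_Abs_poly_mapping[OF fin_w2])

lemma degf_Df: "degf m = Df (Poly_Mapping.lookup m)"
  by (rule ext) (simp add: degf_def Df_def)

lemma phi_m12: "1 \<le> r \<Longrightarrow> phi_mono (m1 r) = phi_mono (m2 r)"
  by (simp add: phi_mono_eq_iff degf_Df lookup_m1 lookup_m2 Df_w_eq)

lemma m12_neq: "m1 r \<noteq> m2 r"
proof
  assume "m1 r = m2 r"
  then have "w1 r (Edge2 0) = w2 r (Edge2 0)" by (metis lookup_m1 lookup_m2)
  then show False by simp
qed

lemma card_m1: "r \<le> card (Poly_Mapping.keys (m1 r))"
proof -
  have md: "(4*t+2) mod 4 = (2::nat)" for t by presburger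
  have "(\<lambda>t. Edge2 (4*t+2)) ` {..<r} \<subseteq> Poly_Mapping.keys (m1 r)"
    by (auto simp: in_keys_iff lookup_m1 md simp del: add_2_eq_Suc add_2_eq_Suc')
  moreover have "card ((\<lambda>t. Edge2 (4*t+2)) ` {..<r}) = r"
    by (subst card_image) (auto simp: inj_on_def)
  ultimately show ?thesis by (metis card_mono finite_keys)
qed

lemma rigid_below:
  assumes "1 \<le> r" "\<And>v. Poly_Mapping.lookup b v \<le> w1 r v" "b \<noteq> m1 r"
  shows "rigid b"
  unfolding rigid_def
proof (intro allI impI)
  fix b' assume "phi_mono b' = phi_mono b"
  then have "\<And>i. Df (Poly_Mapping.lookup b') i = Df (Poly_Mapping.lookup b) i"
    by (simp add: phi_mono_eq_iff degf_Df)
  from rigid_core[OF assms(1) assms(2) this]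
  have "Poly_Mapping.lookup b' = Poly_Mapping.lookup b \<or> Poly_Mapping.lookup b = w1 r" .
  moreover have "Poly_Mapping.lookup b \<noteq> w1 r" using assms(3) lookup_m1[of r]
    by (metis poly_mapping_eqI)
  ultimately show "b' = b" by (metis poly_mapping_eqI)
qed

lemma binom_ker:
  assumes "1 \<le> r"
  shows "(Poly_Mapping.single (m1 r) 1 - Poly_Mapping.single (m2 r) 1 :: (rvar, 'k::field) mpoly) \<in> kerI"
proof -
  let ?p = "Poly_Mapping.single (m1 r) 1 - Poly_Mapping.single (m2 r) 1 :: (rvar, 'k) mpoly"
  have l1: "Poly_Mapping.lookup ?p (m1 r) = 1" and l2: "Poly_Mapping.lookup ?p (m2 r) = -1"
    using m12_neq[of r] by (auto simp: lookup_minus lookup_single)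
  have keys: "Poly_Mapping.keys ?p = {m1 r, m2 r}"
    using m12_neq[of r] by (auto simp: in_keys_iff lookup_minus lookup_single)
  have "phi ?p = Poly_Mapping.single (phi_mono (m1 r)) 1 + Poly_Mapping.single (phi_mono (m2 r)) (-1)"
    unfolding phi_def keys using m12_neq[of r] l1 l2 by simp
  also have "\<dots> = 0" using phi_m12[OF assms] by (simp add: single_uminus[symmetric] single_add[symmetric])
  finally show ?thesis by (simp add: kerI_def)
qed

theorem corollary6p9:
  shows "\<not> (\<exists>F. finite F \<and> F \<subseteq> (kerI :: (rvar, 'k::field) mpoly set) \<and>
            ideal_gen {sh k f | k f. f \<in> F} = kerI)"
proof
  assume "\<exists>F. finite F \<and> F \<subseteq> (kerI :: (rvar, 'k::field) mpoly set) \<and>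
            ideal_gen {sh k f | k f. f \<in> F} = kerI"
  then obtain F :: "(rvar, 'k) mpoly set" where F: "finite F" "F \<subseteq> kerI"
    and gen: "ideal_gen {sh k f | k f. f \<in> F} = kerI" by blast
  have "finite (card ` Poly_Mapping.keys ` (\<Union>f\<in>F. Poly_Mapping.keys f))" using F(1) by simp
  then obtain D where D: "\<And>m f. f \<in> F \<Longrightarrow> m \<in> Poly_Mapping.keys f \<Longrightarrow> card (Poly_Mapping.keys m) \<le> D"
    by (metis (no_types, lifting) UN_I finite_nat_set_iff_bounded_le image_eqI)
  define r where "r = D + 1"
  have r1: "1 \<le> r" by (simp add: r_def)
  let ?p = "Poly_Mapping.single (m1 r) 1 - Poly_Mapping.single (m2 r) 1 :: (rvar, 'k) mpoly"
  have "?p \<in> ideal_gen {sh k f | k f. f \<in> F}" using gen binom_ker[OF r1] by simp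
  then have "\<exists>(n::nat) c g. ?p = (\<Sum>i<n. c i * g i) \<and> (\<forall>i<n. g i \<in> {sh k f | k f. f \<in> F})"
    unfolding ideal_gen_def by blast
  then obtain n c g where p: "?p = (\<Sum>i<(n::nat). c i * g i)" and g: "\<forall>i<n. g i \<in> {sh k f | k f. f \<in> F}"
    by blast
  have "Poly_Mapping.lookup (c i * g i) (m1 r) = 0" if hi: "i < n" for i
  proof -
    obtain k f where gi: "g i = sh k f" and f: "f \<in> F" using g hi by blast
    have fk: "f \<in> kerI" using F(2) f by blast
    show ?thesis
    proof (rule lookup_mult_zero)
      fix q :: "rvar \<Rightarrow>\<^sub>0 nat"
      assume le: "\<And>v. Poly_Mapping.lookup q v \<le> Poly_Mapping.lookup (m1 r) v"
      show "Poly_Mapping.lookup (g i) q = 0"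
      proof (cases "q = m1 r")
        case True
        have "m1 r \<notin> Poly_Mapping.keys (sh k f)"
        proof
          assume "m1 r \<in> Poly_Mapping.keys (sh k f)"
          then obtain m where m: "m \<in> Poly_Mapping.keys f" "m1 r = shift_mono k m" using keys_sh by blast
          then have "card (Poly_Mapping.keys (m1 r)) \<le> D" using D[OF f m(1)] by (simp add: card_keys_shift_mono)
          then show False using card_m1[of r] by (simp add: r_def)
        qed
        then show ?thesis using True gi by (simp add: in_keys_iff)
      next
        case False
        have "rigid q" using rigid_below[OF r1 _ False] le by (simp add: lookup_m1)
        then show ?thesis using gi sh_rigid[OF fk] by simp
      qed
    qed
  qed
  then have "Poly_Mapping.lookup ?p (m1 r) = 0" unfolding p by (simp add: lookup_sum)
  moreover have "Poly_Mapping.lookup ?p (m1 r) = 1" using m12_neq[of r] by (simp add: lookup_minus lookup_single)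
  ultimately show False by simp
qed

end
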